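(* Let $\phi$ be a continuous-time random dynamical system and for $h>0$ let $\varphi_h(\omega)=\phi(h,\omega)$ be its time-$h$ map, generating the discrete random dynamical system $\varphi_h^k(\omega)=\phi(kh,\omega)$, $k\in\mathbb Z$, over $\theta_h$. Suppose there exists $\delta>0$ such that for every $h\in(0,\delta]$, the random set $S$ is a random isolated invariant set of $\varphi_h$. Then $S$ is a random isolated invariant set of $\phi$.
   Context: Let $(\Omega,\mathscr F,\mathbb P)$ be a probability space with a measurable flow $(\theta_t)_{t\in\mathbb R}$ preserving $\mathbb P$, and $(X,d_X)$ a locally compact separable complete metric space. A continuous-time random dynamical system is a measurable map $\phi:\mathbb R\times\Omega\times X\to X$ with $(t,x)\mapsto\phi(t,\omega,x)$ continuous for each $\omega$, $\phi(0,\omega)=\mathrm{id}_X$ and $\phi(t+s,\omega)=\phi(t,\theta_s\omega)\circ\phi(s,\omega)$ for all $t,s,\omega$. A multifunction $D$ with compact values is a random compact set if $\omega\mapsto\mathrm{dist}_X(x,D(\omega))$ is measurable for each $x$. For a random compact set $N$ and the time set $\mathbb T=\mathbb R$ (for $\phi$) or $\mathbb T=h\mathbb Z$ (for $\varphi_h$), $\mathrm{Inv}N(\omega)=\{x\in N(\omega):\phi(t,\omega,x)\in N(\theta_t\omega)\ \forall t\in\mathbb T\}$; $N$ is a random isolating neighborhood if $\mathrm{Inv}N(\omega)\subset\mathrm{int}N(\omega)$, and $S$ is a random isolated invariant set if $S=\mathrm{Inv}N$ for some random isolating neighborhood $N$. *)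

theory Defs
  imports "HOL-Probability.Probability"
begin

definition metric_dyn_system :: "'w measure \<Rightarrow> (real \<Rightarrow> 'w \<Rightarrow> 'w) \<Rightarrow> bool" where
  "metric_dyn_system M \<theta> \<longleftrightarrow>
     prob_space M \<and>
     (\<lambda>(t, \<omega>). \<theta> t \<omega>) \<in> (borel \<Otimes>\<^sub>M M) \<rightarrow>\<^sub>M M \<and>
     (\<forall>\<omega>\<in>space M. \<theta> 0 \<omega> = \<omega>) \<and>
     (\<forall>t s. \<forall>\<omega>\<in>space M. \<theta> (t + s) \<omega> = \<theta> t (\<theta> s \<omega>)) \<and>
     (\<forall>t. \<theta> t \<in> M \<rightarrow>\<^sub>M M \<and> distr M M (\<theta> t) = M)"

definition RDS :: "'w measure \<Rightarrow> (real \<Rightarrow> 'w \<Rightarrow> 'w) \<Rightarrow> (real \<Rightarrow> 'w \<Rightarrow> 'a::metric_space \<Rightarrow> 'a) \<Rightarrow> bool" where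
  "RDS M \<theta> \<phi> \<longleftrightarrow>
     (\<lambda>(t, \<omega>, x). \<phi> t \<omega> x) \<in> (borel \<Otimes>\<^sub>M M \<Otimes>\<^sub>M borel) \<rightarrow>\<^sub>M borel \<and>
     (\<forall>\<omega>\<in>space M. continuous_on UNIV (\<lambda>(t, x). \<phi> t \<omega> x)) \<and>
     (\<forall>\<omega>\<in>space M. \<forall>x. \<phi> 0 \<omega> x = x) \<and>
     (\<forall>t s. \<forall>\<omega>\<in>space M. \<forall>x. \<phi> (t + s) \<omega> x = \<phi> t (\<theta> s \<omega>) (\<phi> s \<omega> x))"

definition random_compact_set :: "'w measure \<Rightarrow> ('w \<Rightarrow> 'a::metric_space set) \<Rightarrow> bool" where
  "random_compact_set M D \<longleftrightarrow>
     (\<forall>\<omega>\<in>space M. compact (D \<omega>)) \<and>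
     (\<forall>x. (\<lambda>\<omega>. infdist x (D \<omega>)) \<in> borel_measurable M)"

definition Inv :: "real set \<Rightarrow> (real \<Rightarrow> 'w \<Rightarrow> 'w) \<Rightarrow> (real \<Rightarrow> 'w \<Rightarrow> 'a \<Rightarrow> 'a) \<Rightarrow> ('w \<Rightarrow> 'a set) \<Rightarrow> 'w \<Rightarrow> 'a set" where
  "Inv T \<theta> \<phi> N \<omega> = {x \<in> N \<omega>. \<forall>t\<in>T. \<phi> t \<omega> x \<in> N (\<theta> t \<omega>)}"

definition random_isolating_nbhd :: "'w measure \<Rightarrow> real set \<Rightarrow> (real \<Rightarrow> 'w \<Rightarrow> 'w) \<Rightarrow> (real \<Rightarrow> 'w \<Rightarrow> 'a::metric_space \<Rightarrow> 'a) \<Rightarrow> ('w \<Rightarrow> 'a set) \<Rightarrow> bool" where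
  "random_isolating_nbhd M T \<theta> \<phi> N \<longleftrightarrow>
     random_compact_set M N \<and> (\<forall>\<omega>\<in>space M. Inv T \<theta> \<phi> N \<omega> \<subseteq> interior (N \<omega>))"

definition random_isolated_invariant_set :: "'w measure \<Rightarrow> real set \<Rightarrow> (real \<Rightarrow> 'w \<Rightarrow> 'w) \<Rightarrow> (real \<Rightarrow> 'w \<Rightarrow> 'a::metric_space \<Rightarrow> 'a) \<Rightarrow> ('w \<Rightarrow> 'a set) \<Rightarrow> bool" where
  "random_isolated_invariant_set M T \<theta> \<phi> S \<longleftrightarrow>
     (\<exists>N. random_isolating_nbhd M T \<theta> \<phi> N \<and> (\<forall>\<omega>\<in>space M. S \<omega> = Inv T \<theta> \<phi> N \<omega>))"

text \<open>The time set h*Z of the time-h map.\<close>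
definition hZ :: "real \<Rightarrow> real set" where
  "hZ h = {h * of_int k | k. True}"

end

theory Submission
  imports Defs
begin

lemma hZ_add: "a \<in> hZ h \<Longrightarrow> b \<in> hZ h \<Longrightarrow> a + b \<in> hZ h"
proof -
  assume "a \<in> hZ h" "b \<in> hZ h"
  then obtain i j where "a = h * of_int i" "b = h * of_int j" unfolding hZ_def by auto
  then have "a + b = h * of_int (i + j)" by (simp add: algebra_simps)
  then show ?thesis unfolding hZ_def by blast
qed

lemma hZ_exists:
  fixes t \<delta> :: real assumes "\<delta> > 0"
  shows "\<exists>h\<in>{0<..\<delta>}. t \<in> hZ h"
proof (cases "t = 0")
  case True
  then show ?thesis using assms unfolding hZ_def by (intro bexI[of _ \<delta>]) (auto intro!: exI[of _ 0])
next
  case False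
  define n where "n = nat (ceiling (\<bar>t\<bar> / \<delta>))"
  have pos: "\<bar>t\<bar> / \<delta> > 0" using False assms by simp
  have n1: "real n \<ge> \<bar>t\<bar> / \<delta>" unfolding n_def by linarith
  have npos: "real n > 0" using n1 pos by linarith
  define h where "h = \<bar>t\<bar> / real n"
  have hpos: "h > 0" using False npos unfolding h_def by simp
  have "\<bar>t\<bar> \<le> real n * \<delta>" using n1 assms by (simp add: field_simps)
  then have hle: "h \<le> \<delta>" unfolding h_def using npos by (simp add: field_simps)
  have "t = h * of_int (if t > 0 then int n else - int n)"
    unfolding h_def using npos by (cases "t > 0") (auto simp: field_simps)
  then have "t \<in> hZ h" unfolding hZ_def by blast
  then show ?thesis using hpos hle by auto
qed

theorem mainTheorem12:
  fixes M :: "'w measure" and \<theta> :: "real \<Rightarrow> 'w \<Rightarrow> 'w"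
    and \<phi> :: "real \<Rightarrow> 'w \<Rightarrow> 'a::polish_space \<Rightarrow> 'a"
    and S :: "'w \<Rightarrow> 'a set"
  assumes "metric_dyn_system M \<theta>"
    and "locally_compact_space (euclidean :: 'a topology)"
    and "RDS M \<theta> \<phi>"
    and "\<exists>\<delta>>0. \<forall>h\<in>{0<..\<delta>}. random_isolated_invariant_set M (hZ h) \<theta> \<phi> S"
  shows "random_isolated_invariant_set M UNIV \<theta> \<phi> S"
proof -
  obtain \<delta> where dpos: "\<delta> > 0" and iso: "\<And>h. h \<in> {0<..\<delta>} \<Longrightarrow> random_isolated_invariant_set M (hZ h) \<theta> \<phi> S"
    using assms(4) by blast
  have thsp: "\<And>t \<omega>. \<omega> \<in> space M \<Longrightarrow> \<theta> t \<omega> \<in> space M"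
    using assms(1) unfolding metric_dyn_system_def by (meson measurable_space)
  have thadd: "\<And>t s \<omega>. \<omega> \<in> space M \<Longrightarrow> \<theta> (t + s) \<omega> = \<theta> t (\<theta> s \<omega>)"
    using assms(1) unfolding metric_dyn_system_def by blast
  have phadd: "\<And>t s \<omega> x. \<omega> \<in> space M \<Longrightarrow> \<phi> (t + s) \<omega> x = \<phi> t (\<theta> s \<omega>) (\<phi> s \<omega> x)"
    using assms(3) unfolding RDS_def by blast
  have key: "\<phi> t \<omega> x \<in> S (\<theta> t \<omega>)" if h: "h \<in> {0<..\<delta>}" and w: "\<omega> \<in> space M"
    and x: "x \<in> S \<omega>" and t: "t \<in> hZ h" for h t \<omega> x
  proof -
    obtain N where NS: "\<forall>\<omega>\<in>space M. S \<omega> = Inv (hZ h) \<theta> \<phi> N \<omega>"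
      using iso[OF h] unfolding random_isolated_invariant_set_def by blast
    have w': "\<theta> t \<omega> \<in> space M" using thsp w .
    have xi: "x \<in> N \<omega>" "\<forall>s\<in>hZ h. \<phi> s \<omega> x \<in> N (\<theta> s \<omega>)"
      using x NS w unfolding Inv_def by auto
    have "\<phi> t \<omega> x \<in> Inv (hZ h) \<theta> \<phi> N (\<theta> t \<omega>)"
      unfolding Inv_def
    proof (intro CollectI conjI ballI)
      show "\<phi> t \<omega> x \<in> N (\<theta> t \<omega>)" using xi t by blast
    next
      fix s assume s: "s \<in> hZ h"
      have "\<phi> s (\<theta> t \<omega>) (\<phi> t \<omega> x) = \<phi> (s + t) \<omega> x" using phadd w by simp
      moreover have "\<theta> s (\<theta> t \<omega>) = \<theta> (s + t) \<omega>" using thadd w by simp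
      moreover have "s + t \<in> hZ h" using hZ_add s t by blast
      ultimately show "\<phi> s (\<theta> t \<omega>) (\<phi> t \<omega> x) \<in> N (\<theta> s (\<theta> t \<omega>))" using xi by simp
    qed
    then show ?thesis using NS w' by simp
  qed
  have dh: "\<delta> \<in> {0<..\<delta>}" using dpos by simp
  obtain N where Nn: "random_isolating_nbhd M (hZ \<delta>) \<theta> \<phi> N"
    and NS: "\<forall>\<omega>\<in>space M. S \<omega> = Inv (hZ \<delta>) \<theta> \<phi> N \<omega>"
    using iso[OF dh] unfolding random_isolated_invariant_set_def by blast
  have SN: "\<And>\<omega>. \<omega> \<in> space M \<Longrightarrow> S \<omega> \<subseteq> N \<omega>" using NS unfolding Inv_def by auto
  have eq: "S \<omega> = Inv UNIV \<theta> \<phi> N \<omega>" if w: "\<omega> \<in> space M" for \<omega>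
  proof
    show "S \<omega> \<subseteq> Inv UNIV \<theta> \<phi> N \<omega>"
    proof
      fix x assume x: "x \<in> S \<omega>"
      have "\<forall>t. \<phi> t \<omega> x \<in> N (\<theta> t \<omega>)"
      proof
        fix t
        obtain h where "h \<in> {0<..\<delta>}" "t \<in> hZ h" using hZ_exists dpos by blast
        then have "\<phi> t \<omega> x \<in> S (\<theta> t \<omega>)" using key w x by blast
        then show "\<phi> t \<omega> x \<in> N (\<theta> t \<omega>)" using SN thsp w by blast
      qed
      then show "x \<in> Inv UNIV \<theta> \<phi> N \<omega>" using x SN w unfolding Inv_def by auto
    qed
  next
    show "Inv UNIV \<theta> \<phi> N \<omega> \<subseteq> S \<omega>" using NS w unfolding Inv_def by auto
  qed
  have "random_isolating_nbhd M UNIV \<theta> \<phi> N"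
    using Nn eq NS unfolding random_isolating_nbhd_def by auto
  then show ?thesis unfolding random_isolated_invariant_set_def using eq by blast
qed

end
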